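(* Let a shallow network with neurons $(V_0,V_1,V_2)$ and activation $\psi$ be given and let $\theta$ be a redundant parameter. Then there exist $\tilde V_1\subseteq V_1$ and an efficient parameter $\tilde\theta$ of the pruned network with neurons $(V_0,\tilde V_1,V_2)$ and activation $\psi$ such that $\Psi_\theta(x)=\Psi_{\tilde\theta}(x)$ for all $x\in\mathcal{X}$. Furthermore, if $\#V_2=1$ and $\theta$ is a critical point of a cost $J_{\mathbf m}(\vartheta)=\mathbb{E}_{\mathbf m}[\ell(\Psi_\vartheta(X),Y)]$ (for some loss $\ell$ and expectation $\mathbb{E}_{\mathbf m}$ induced by a distribution $\mathbb{P}_{\mathbf m}$, with $\ell$ and $\psi$ regular enough that derivatives may be moved into $\mathbb{E}_{\mathbf m}$), then $\tilde\theta$ is a critical point of the corresponding cost for the pruned network.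
   Context: Shallow network: finite pairwise disjoint $V_0,V_1,V_2$, activation $\psi$; $E=(V_0\times V_1)\cup(V_1\times V_2)$; parameters $\theta=(w,\beta)\in\mathbb{R}^E\times\mathbb{R}^{V_1\cup V_2}$; response $(\Psi_\theta(x))_l=\beta_l+\sum_{j\in V_1}\psi(\beta_j+\sum_{i\in V_0}x_iw_{ij})w_{jl}$; $w_{j\bullet}=(w_{jl})_{l\in V_2}$. $\mathcal{X}\subseteq\mathbb{R}^{V_0}$ is the support of the distribution of the input $X$. $\theta$ is efficient if (a) $w_{k\bullet}\neq0$ for all $k\in V_1$ and (b) the only $\lambda$ with $\lambda_\emptyset+\sum_{j\in V_1}\lambda_j\psi(\beta_j+\sum_ix_iw_{ij})=0$ for all $x\in\mathcal{X}$ is $\lambda\equiv0$; otherwise redundant. A network with no hidden neurons has only the output bias as parameter (and such a parameter is efficient). *)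

theory Defs
  imports "HOL-Probability.Probability"
begin

text \<open>A parameter theta = (w, beta):
  w i j is the weight on edge (i,j), beta j the bias of neuron j.  Only the values
  on E = (V0 x V1) u (V1 x V2) resp. V1 u V2 are relevant.\<close>

type_synonym 'n param = "('n \<Rightarrow> 'n \<Rightarrow> real) \<times> ('n \<Rightarrow> real)"

definition hidden_out :: "'n set \<Rightarrow> (real \<Rightarrow> real) \<Rightarrow> 'n param \<Rightarrow> 'n \<Rightarrow> ('n \<Rightarrow> real) \<Rightarrow> real" where
  "hidden_out V0 \<psi> \<theta> j x = \<psi> (snd \<theta> j + (\<Sum>i\<in>V0. x i * fst \<theta> i j))"

definition response :: "'n set \<Rightarrow> 'n set \<Rightarrow> 'n set \<Rightarrow> (real \<Rightarrow> real) \<Rightarrow> 'n param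
    \<Rightarrow> ('n \<Rightarrow> real) \<Rightarrow> ('n \<Rightarrow> real)" where
  "response V0 V1 V2 \<psi> \<theta> x =
     (\<lambda>l\<in>V2. snd \<theta> l + (\<Sum>j\<in>V1. hidden_out V0 \<psi> \<theta> j x * fst \<theta> j l))"

text \<open>Efficiency with respect to the input support X (a network without hidden neurons
  is efficient by convention).\<close>
definition efficient :: "'n set \<Rightarrow> 'n set \<Rightarrow> 'n set \<Rightarrow> (real \<Rightarrow> real) \<Rightarrow> ('n \<Rightarrow> real) set
    \<Rightarrow> 'n param \<Rightarrow> bool" where
  "efficient V0 V1 V2 \<psi> \<X> \<theta> \<longleftrightarrow>
     V1 = {} \<or>
     ((\<forall>k\<in>V1. \<exists>l\<in>V2. fst \<theta> k l \<noteq> 0) \<and>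
      (\<forall>(c0::real) (c::'n \<Rightarrow> real).
          (\<forall>x\<in>\<X>. c0 + (\<Sum>j\<in>V1. c j * hidden_out V0 \<psi> \<theta> j x) = 0)
          \<longrightarrow> c0 = 0 \<and> (\<forall>j\<in>V1. c j = 0)))"

definition redundant :: "'n set \<Rightarrow> 'n set \<Rightarrow> 'n set \<Rightarrow> (real \<Rightarrow> real) \<Rightarrow> ('n \<Rightarrow> real) set
    \<Rightarrow> 'n param \<Rightarrow> bool" where
  "redundant V0 V1 V2 \<psi> \<X> \<theta> \<longleftrightarrow> \<not> efficient V0 V1 V2 \<psi> \<X> \<theta>"

text \<open>Support of the distribution of the input X = fst under M (inputs live in R^{V0},
  represented as extensional functions on V0; neighbourhoods are sup-norm balls).\<close>
definition input_support :: "(('n \<Rightarrow> real) \<times> 'y) measure \<Rightarrow> 'n set \<Rightarrow> ('n \<Rightarrow> real) set" where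
  "input_support M V0 =
     {x \<in> space (PiM V0 (\<lambda>_. borel)). \<forall>e>0.
        emeasure M {z \<in> space M. \<forall>i\<in>V0. \<bar>fst z i - x i\<bar> < e} > 0}"

definition cost :: "'n set \<Rightarrow> 'n set \<Rightarrow> 'n set \<Rightarrow> (real \<Rightarrow> real) \<Rightarrow> (('n \<Rightarrow> real) \<Rightarrow> 'y \<Rightarrow> real)
    \<Rightarrow> (('n \<Rightarrow> real) \<times> 'y) measure \<Rightarrow> 'n param \<Rightarrow> real" where
  "cost V0 V1 V2 \<psi> loss M \<theta> = (\<integral>z. loss (response V0 V1 V2 \<psi> \<theta> (fst z)) (snd z) \<partial>M)"

datatype 'n coord = W 'n 'n | B 'n

definition coords :: "'n set \<Rightarrow> 'n set \<Rightarrow> 'n set \<Rightarrow> 'n coord set" where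
  "coords V0 V1 V2 = {W i j |i j. (i, j) \<in> (V0 \<times> V1) \<union> (V1 \<times> V2)} \<union> B ` (V1 \<union> V2)"

fun shift :: "'n param \<Rightarrow> 'n coord \<Rightarrow> real \<Rightarrow> 'n param" where
  "shift \<theta> (W i j) t = ((fst \<theta>)(i := (fst \<theta> i)(j := fst \<theta> i j + t)), snd \<theta>)"
| "shift \<theta> (B j) t = (fst \<theta>, (snd \<theta>)(j := snd \<theta> j + t))"

definition critical_point :: "'n set \<Rightarrow> 'n set \<Rightarrow> 'n set \<Rightarrow> (real \<Rightarrow> real)
    \<Rightarrow> (('n \<Rightarrow> real) \<Rightarrow> 'y \<Rightarrow> real) \<Rightarrow> (('n \<Rightarrow> real) \<times> 'y) measure \<Rightarrow> 'n param \<Rightarrow> bool" where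
  "critical_point V0 V1 V2 \<psi> loss M \<theta> \<longleftrightarrow>
     (\<forall>c\<in>coords V0 V1 V2.
        ((\<lambda>t. cost V0 V1 V2 \<psi> loss M (shift \<theta> c t)) has_real_derivative 0) (at 0))"

definition deriv_interchange :: "'n set \<Rightarrow> 'n set \<Rightarrow> 'n set \<Rightarrow> (real \<Rightarrow> real)
    \<Rightarrow> (('n \<Rightarrow> real) \<Rightarrow> 'y \<Rightarrow> real) \<Rightarrow> (('n \<Rightarrow> real) \<times> 'y) measure \<Rightarrow> bool" where
  "deriv_interchange V0 V1 V2 \<psi> loss M \<longleftrightarrow>
     (\<forall>\<theta>. \<forall>c\<in>coords V0 V1 V2. \<exists>D.
        (\<forall>z\<in>space M. ((\<lambda>t. loss (response V0 V1 V2 \<psi> (shift \<theta> c t) (fst z)) (snd z))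
                         has_real_derivative D z) (at 0)) \<and>
        integrable M D \<and>
        ((\<lambda>t. cost V0 V1 V2 \<psi> loss M (shift \<theta> c t)) has_real_derivative (\<integral>z. D z \<partial>M)) (at 0))"

end

theory Submission
  imports Defs
begin


lemma prune:
  fixes X :: "('n \<Rightarrow> real) set" and \<theta> :: "'n param"
  assumes "finite V1" "V0 \<inter> V1 = {}" "V1 \<inter> V2 = {}"
  shows "\<exists>V1' \<theta>'. V1' \<subseteq> V1 \<and> efficient V0 V1' V2 \<psi> X \<theta>'
     \<and> (\<forall>x\<in>X. response V0 V1 V2 \<psi> \<theta> x = response V0 V1' V2 \<psi> \<theta>' x)
     \<and> (\<forall>j\<in>V1'. snd \<theta>' j = snd \<theta> j \<and> (\<forall>i\<in>V0. fst \<theta>' i j = fst \<theta> i j) \<and> (\<exists>l\<in>V2. fst \<theta> j l \<noteq> 0))"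
  using assms
proof (induction V1 arbitrary: \<theta> rule: finite_psubset_induct)
  case (psubset V1)
  show ?case
  proof (cases "efficient V0 V1 V2 \<psi> X \<theta>")
    case True
    then show ?thesis
      by (rule_tac x=V1 in exI, rule_tac x=\<theta> in exI) (auto simp: efficient_def)
  next
    case notef: False
    show ?thesis
    proof (cases "\<exists>k\<in>V1. \<forall>l\<in>V2. fst \<theta> k l = 0")
      case True
      then obtain k where k: "k \<in> V1" "\<forall>l\<in>V2. fst \<theta> k l = 0" by blast
      have ps: "V1 - {k} \<subset> V1" using k by auto
      have "V0 \<inter> (V1 - {k}) = {}" "(V1 - {k}) \<inter> V2 = {}" using psubset.prems by auto
      from psubset.IH[OF ps this, where \<theta>=\<theta>] obtain V1' \<theta>' where
        r: "V1' \<subseteq> V1 - {k}" "efficient V0 V1' V2 \<psi> X \<theta>'"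
          "\<forall>x\<in>X. response V0 (V1 - {k}) V2 \<psi> \<theta> x = response V0 V1' V2 \<psi> \<theta>' x"
          "\<forall>j\<in>V1'. snd \<theta>' j = snd \<theta> j \<and> (\<forall>i\<in>V0. fst \<theta>' i j = fst \<theta> i j) \<and> (\<exists>l\<in>V2. fst \<theta> j l \<noteq> 0)"
        by blast
      have "response V0 V1 V2 \<psi> \<theta> x = response V0 (V1 - {k}) V2 \<psi> \<theta> x" for x
        unfolding response_def
        using k psubset.hyps by (auto simp: sum.remove[of V1 k] intro!: restrict_ext)
      then show ?thesis using r by (rule_tac x=V1' in exI, rule_tac x=\<theta>' in exI) auto
    next
      case False
      hence nzall: "\<forall>k\<in>V1. \<exists>l\<in>V2. fst \<theta> k l \<noteq> 0" by auto
      from notef nzall obtain c0 c where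
        dep: "\<forall>x\<in>X. c0 + (\<Sum>j\<in>V1. c j * hidden_out V0 \<psi> \<theta> j x) = 0"
        and nt: "\<not> (c0 = 0 \<and> (\<forall>j\<in>V1. c j = 0))"
        unfolding efficient_def by blast
      show ?thesis
      proof (cases "\<forall>j\<in>V1. c j = 0")
        case True
        then have "X = {}" using dep nt by auto
        then show ?thesis
          by (rule_tac x="{}" in exI, rule_tac x=\<theta> in exI) (auto simp: efficient_def)
      next
        case False
        then obtain k where k: "k \<in> V1" "c k \<noteq> 0" by auto
        define \<theta>1 :: "'n param" where "\<theta>1 = (\<lambda>i j. if i \<in> V1 - {k} \<and> j \<in> V2
             then fst \<theta> i j - c i / c k * fst \<theta> k j else fst \<theta> i j,
           \<lambda>j. if j \<in> V2 then snd \<theta> j - c0 / c k * fst \<theta> k j else snd \<theta> j)"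
        have hid1: "snd \<theta>1 j = snd \<theta> j" if "j \<in> V1" for j
          using that psubset.prems by (auto simp: \<theta>1_def)
        have hid2: "fst \<theta>1 i j = fst \<theta> i j" if "i \<in> V0" for i j
          using that psubset.prems by (auto simp: \<theta>1_def)
        have hout: "hidden_out V0 \<psi> \<theta>1 j x = hidden_out V0 \<psi> \<theta> j x" if "j \<in> V1" for j x
          using that hid1 hid2 by (simp add: hidden_out_def)
        have ps: "V1 - {k} \<subset> V1" using k by auto
        have "V0 \<inter> (V1 - {k}) = {}" "(V1 - {k}) \<inter> V2 = {}" using psubset.prems by auto
        from psubset.IH[OF ps this, where \<theta>=\<theta>1] obtain V1' \<theta>' where
          r: "V1' \<subseteq> V1 - {k}" "efficient V0 V1' V2 \<psi> X \<theta>'"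
            "\<forall>x\<in>X. response V0 (V1 - {k}) V2 \<psi> \<theta>1 x = response V0 V1' V2 \<psi> \<theta>' x"
            "\<forall>j\<in>V1'. snd \<theta>' j = snd \<theta>1 j \<and> (\<forall>i\<in>V0. fst \<theta>' i j = fst \<theta>1 i j) \<and> (\<exists>l\<in>V2. fst \<theta>1 j l \<noteq> 0)"
          by blast
        have resp: "response V0 V1 V2 \<psi> \<theta> x = response V0 (V1 - {k}) V2 \<psi> \<theta>1 x" if x: "x \<in> X" for x
          unfolding response_def
        proof (rule restrict_ext)
          fix l assume l: "l \<in> V2"
          define h where "h j = hidden_out V0 \<psi> \<theta> j x" for j
          define S where "S = (\<Sum>j\<in>V1-{k}. c j * h j)"
          have d: "c0 + c k * h k + S = 0"
            using dep x k psubset.hyps unfolding S_def h_def by (simp add: sum.remove[of V1 k] add.assoc)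
          have hk: "h k = - (c0 + S) / c k" using d k by (simp add: field_simps)
          have "(\<Sum>j\<in>V1 - {k}. hidden_out V0 \<psi> \<theta>1 j x * fst \<theta>1 j l)
              = (\<Sum>j\<in>V1 - {k}. h j * fst \<theta> j l - (fst \<theta> k l / c k) * (c j * h j))"
          proof (rule sum.cong[OF refl])
            fix j assume j: "j \<in> V1 - {k}"
            have a: "hidden_out V0 \<psi> \<theta>1 j x = h j" using hout j unfolding h_def by auto
            have b: "fst \<theta>1 j l = fst \<theta> j l - c j / c k * fst \<theta> k l" using j l by (simp add: \<theta>1_def)
            show "hidden_out V0 \<psi> \<theta>1 j x * fst \<theta>1 j l = h j * fst \<theta> j l - (fst \<theta> k l / c k) * (c j * h j)"
              unfolding a b by (simp add: algebra_simps)
          qed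
          also have "\<dots> = (\<Sum>j\<in>V1 - {k}. h j * fst \<theta> j l) - (fst \<theta> k l / c k) * S"
            by (simp add: sum_subtractf sum_distrib_left S_def)
          finally have e: "(\<Sum>j\<in>V1 - {k}. hidden_out V0 \<psi> \<theta>1 j x * fst \<theta>1 j l)
              = (\<Sum>j\<in>V1 - {k}. h j * fst \<theta> j l) - (fst \<theta> k l / c k) * S" .
          have "snd \<theta> l + (\<Sum>j\<in>V1. hidden_out V0 \<psi> \<theta> j x * fst \<theta> j l)
              = snd \<theta> l + h k * fst \<theta> k l + (\<Sum>j\<in>V1 - {k}. h j * fst \<theta> j l)"
            using k psubset.hyps by (simp add: sum.remove[of V1 k] h_def)
          also have "\<dots> = snd \<theta>1 l + (\<Sum>j\<in>V1 - {k}. hidden_out V0 \<psi> \<theta>1 j x * fst \<theta>1 j l)"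
            unfolding e using l k by (simp add: \<theta>1_def hk field_simps)
          finally show "snd \<theta> l + (\<Sum>j\<in>V1. hidden_out V0 \<psi> \<theta> j x * fst \<theta> j l)
              = snd \<theta>1 l + (\<Sum>j\<in>V1 - {k}. hidden_out V0 \<psi> \<theta>1 j x * fst \<theta>1 j l)" .
        qed
        show ?thesis
          using r resp nzall hid1 hid2
          by (rule_tac x=V1' in exI, rule_tac x=\<theta>' in exI) fastforce
      qed
    qed
  qed
qed



lemma support_AE:
  fixes M :: "(('n \<Rightarrow> real) \<times> 'y) measure"
  assumes fin: "finite V0" and sets_eq: "sets M = sets (PiM V0 (\<lambda>_. borel) \<Otimes>\<^sub>M Ny)"
  shows "AE z in M. fst z \<in> input_support M V0"
proof -
  have [measurable]: "fst \<in> M \<rightarrow>\<^sub>M PiM V0 (\<lambda>_. borel)"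
    using measurable_cong_sets[OF sets_eq refl] measurable_fst by blast
  define ball where "ball q r = {z \<in> space M. \<forall>i\<in>V0. \<bar>fst z i - q i\<bar> < (r::real)}" for q :: "'n \<Rightarrow> real" and r
  have bm: "ball q r \<in> sets M" for q r
    unfolding ball_def using fin by measurable
  define C where "C = {(q, n). q \<in> PiE V0 (\<lambda>_. \<rat>) \<and> emeasure M (ball q (1 / Suc n)) = 0}"
  have cC: "countable C"
  proof (rule countable_subset)
    show "C \<subseteq> PiE V0 (\<lambda>_. \<rat>) \<times> (UNIV :: nat set)" by (auto simp: C_def)
    show "countable (PiE V0 (\<lambda>_. \<rat>) \<times> (UNIV :: nat set))"
      using fin by (intro countable_SIGMA countable_PiE) (auto simp: countable_rat)
  qed
  have N: "(\<Union>p\<in>C. ball (fst p) (1 / Suc (snd p))) \<in> null_sets M"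
    using cC by (intro null_sets_UN') (auto simp: C_def bm null_setsI)
  show ?thesis
  proof (rule AE_I'[OF N], safe)
    fix z assume z: "z \<in> space M" and nz: "fst z \<notin> input_support M V0"
    have fz: "fst z \<in> space (PiM V0 (\<lambda>_. borel))"
      using z measurable_space[of fst M "PiM V0 (\<lambda>_. borel)"] by auto
    then obtain e where e: "e > 0" "\<not> emeasure M (ball (fst z) e) > 0"
      using nz unfolding input_support_def ball_def by auto
    obtain n :: nat where n: "1 / Suc n < e / 2"
      using e(1) by (metis half_gt_zero_iff nat_approx_posE One_nat_def)
    have "\<forall>i\<in>V0. \<exists>r\<in>\<rat>. fst z i < r \<and> r < fst z i + 1 / Suc n"
      by (auto intro!: Rats_dense_in_real)
    then obtain qf where qf: "\<And>i. i \<in> V0 \<Longrightarrow> qf i \<in> \<rat> \<and> fst z i < qf i \<and> qf i < fst z i + 1 / Suc n"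
      by metis
    define q where "q = restrict qf V0"
    have q: "q \<in> PiE V0 (\<lambda>_. \<rat>)" using qf by (auto simp: q_def)
    have sub: "ball q (1 / Suc n) \<subseteq> ball (fst z) e"
    proof
      fix w assume "w \<in> ball q (1 / Suc n)"
      then show "w \<in> ball (fst z) e"
        using qf n unfolding ball_def q_def by (force simp: abs_less_iff)
    qed
    have "emeasure M (ball q (1 / Suc n)) \<le> emeasure M (ball (fst z) e)"
      by (rule emeasure_mono[OF sub bm])
    then have "emeasure M (ball q (1 / Suc n)) = 0" using e(2) by (simp add: not_gr_zero)
    then have "(q, n) \<in> C" using q by (auto simp: C_def)
    moreover have "z \<in> ball q (1 / Suc n)"
    proof -
      have "\<bar>fst z i - q i\<bar> < 1 / Suc n" if i: "i \<in> V0" for i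
      proof -
        have "fst z i < qf i" "qf i < fst z i + 1 / Suc n" using qf[OF i] by auto
        moreover have "(0::real) < 1 / Suc n" by simp
        ultimately show ?thesis using i unfolding q_def by (simp add: abs_less_iff)
      qed
      then show ?thesis using z unfolding ball_def by auto
    qed
    ultimately show "z \<in> (\<Union>p\<in>C. ball (fst p) (1 / Suc (snd p)))" by force
  qed
qed



definition pre :: "'n set \<Rightarrow> 'n param \<Rightarrow> 'n \<Rightarrow> ('n \<Rightarrow> real) \<Rightarrow> real" where
  "pre V0 \<phi> j x = snd \<phi> j + (\<Sum>i\<in>V0. x i * fst \<phi> i j)"

definition dlt where
  "dlt V0 V V2 \<psi> \<phi> c l0 x t = response V0 V V2 \<psi> (shift \<phi> c t) x l0 - response V0 V V2 \<psi> \<phi> x l0"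

lemma hidden_pre: "hidden_out V0 \<psi> \<phi> j x = \<psi> (pre V0 \<phi> j x)"
  by (simp add: hidden_out_def pre_def)

lemma sum_single:
  fixes f g :: "'a \<Rightarrow> real"
  assumes "finite V" "j \<in> V" "\<And>k. k \<in> V \<Longrightarrow> k \<noteq> j \<Longrightarrow> f k = g k"
  shows "sum f V - sum g V = f j - g j"
proof -
  have "sum f (V - {j}) = sum g (V - {j})" using assms(3) by (intro sum.cong) auto
  then show ?thesis using assms(1,2) by (simp add: sum.remove[of V j])
qed

lemma dlt_expand:
  assumes "finite V" "l0 \<in> V2"
  shows "dlt V0 V V2 \<psi> \<phi> c l0 x t = (snd (shift \<phi> c t) l0 - snd \<phi> l0)
     + ((\<Sum>k\<in>V. hidden_out V0 \<psi> (shift \<phi> c t) k x * fst (shift \<phi> c t) k l0)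
        - (\<Sum>k\<in>V. hidden_out V0 \<psi> \<phi> k x * fst \<phi> k l0))"
  using assms by (simp add: dlt_def response_def)

lemma dlt_Wh:
  assumes "finite V" "j \<in> V" "i \<in> V0" "V0 \<inter> V = {}" "l0 \<in> V2" "finite V0"
  shows "dlt V0 V V2 \<psi> \<phi> (W i j) l0 x t = (\<psi> (pre V0 \<phi> j x + x i * t) - \<psi> (pre V0 \<phi> j x)) * fst \<phi> j l0"
proof -
  have p: "pre V0 (shift \<phi> (W i j) t) j x = pre V0 \<phi> j x + x i * t"
  proof -
    have "(\<Sum>i'\<in>V0. x i' * fst (shift \<phi> (W i j) t) i' j) - (\<Sum>i'\<in>V0. x i' * fst \<phi> i' j) = x i * t"
      using assms by (subst sum_single[of V0 i]) (auto simp: algebra_simps)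
    then show ?thesis by (simp add: pre_def)
  qed
  have o: "fst (shift \<phi> (W i j) t) k l0 = fst \<phi> k l0" if "k \<in> V" for k
    using that assms by auto
  have h: "hidden_out V0 \<psi> (shift \<phi> (W i j) t) k x = hidden_out V0 \<psi> \<phi> k x" if "k \<noteq> j" for k
    using that by (auto simp: hidden_out_def intro!: arg_cong[where f=\<psi>] sum.cong)
  show ?thesis
    using assms o h p
    by (simp add: dlt_expand, subst sum_single[of V j]) (auto simp: hidden_pre algebra_simps)
qed

lemma dlt_Wo:
  assumes "finite V" "j \<in> V" "V0 \<inter> V = {}" "l0 \<in> V2"
  shows "dlt V0 V V2 \<psi> \<phi> (W j l0) l0 x t = hidden_out V0 \<psi> \<phi> j x * t"
proof -
  have h: "hidden_out V0 \<psi> (shift \<phi> (W j l0) t) k x = hidden_out V0 \<psi> \<phi> k x" for k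
  proof -
    have "j \<notin> V0" using assms by auto
    then show ?thesis unfolding hidden_out_def by (auto intro!: arg_cong[where f=\<psi>] sum.cong)
  qed
  show ?thesis
    using assms h
    by (simp add: dlt_expand, subst sum_single[of V j]) (auto simp: algebra_simps)
qed

lemma dlt_Bh:
  assumes "finite V" "j \<in> V" "V \<inter> V2 = {}" "l0 \<in> V2"
  shows "dlt V0 V V2 \<psi> \<phi> (B j) l0 x t = (\<psi> (pre V0 \<phi> j x + t) - \<psi> (pre V0 \<phi> j x)) * fst \<phi> j l0"
proof -
  have jl: "j \<noteq> l0" using assms by auto
  have h: "hidden_out V0 \<psi> (shift \<phi> (B j) t) k x = hidden_out V0 \<psi> \<phi> k x" if "k \<noteq> j" for k
    using that by (simp add: hidden_out_def)
  have p: "hidden_out V0 \<psi> (shift \<phi> (B j) t) j x = \<psi> (pre V0 \<phi> j x + t)"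
    by (simp add: hidden_out_def pre_def algebra_simps)
  show ?thesis
    using assms h p jl
    by (simp add: dlt_expand, subst sum_single[of V j]) (auto simp: hidden_pre algebra_simps)
qed

lemma dlt_Bo:
  assumes "finite V" "V \<inter> V2 = {}" "l0 \<in> V2"
  shows "dlt V0 V V2 \<psi> \<phi> (B l0) l0 x t = t"
proof -
  have h: "hidden_out V0 \<psi> (shift \<phi> (B l0) t) k x = hidden_out V0 \<psi> \<phi> k x" if "k \<in> V" for k
    using that assms by (auto simp: hidden_out_def)
  show ?thesis
    using assms h by (simp add: dlt_expand)
qed



lemma diff_aux:
  fixes \<psi> :: "real \<Rightarrow> real"
  assumes "\<forall>t. \<psi> differentiable (at t)"
  shows "(\<lambda>t. (\<psi> (p + a * t) - \<psi> p) * w) differentiable (at (0::real))"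
proof -
  have l: "(\<lambda>t::real. p + a * t) differentiable (at 0)"
    by (intro differentiable_add differentiable_mult differentiable_const differentiable_ident)
  have "(\<psi> \<circ> (\<lambda>t::real. p + a * t)) differentiable (at 0)"
    using l assms by (intro differentiable_chain_at) auto
  then have "(\<lambda>t::real. \<psi> (p + a * t)) differentiable (at 0)" by (simp add: o_def)
  then show ?thesis
    by (intro differentiable_mult differentiable_diff differentiable_const)
qed

lemma coords_mono: "V1' \<subseteq> V1 \<Longrightarrow> coords V0 V1' V2 \<subseteq> coords V0 V1 V2"
  unfolding coords_def by blast

lemma kappa:
  assumes fin1: "finite V1" and sub: "V1' \<subseteq> V1" and d01: "V0 \<inter> V1 = {}" and d02: "V0 \<inter> V2 = {}"
    and d12: "V1 \<inter> V2 = {}" and V2: "V2 = {l0}" and fin0: "finite V0"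
    and hid: "\<forall>j\<in>V1'. snd \<theta>' j = snd \<theta> j \<and> (\<forall>i\<in>V0. fst \<theta>' i j = fst \<theta> i j)"
    and nz: "\<forall>j\<in>V1'. fst \<theta> j l0 \<noteq> 0"
    and c: "c \<in> coords V0 V1' V2"
    and dpsi: "\<forall>t. \<psi> differentiable (at t)"
  shows "\<exists>\<kappa>. \<forall>x. (dlt V0 V1 V2 \<psi> \<theta> c l0 x) differentiable (at 0)
            \<and> (\<forall>t. dlt V0 V1' V2 \<psi> \<theta>' c l0 x t = \<kappa> * dlt V0 V1 V2 \<psi> \<theta> c l0 x t)"
proof -
  have fin1': "finite V1'" using fin1 sub finite_subset by blast
  have l0: "l0 \<in> V2" using V2 by auto
  have d01': "V0 \<inter> V1' = {}" and d12': "V1' \<inter> V2 = {}" using d01 d12 sub by auto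
  have pre_eq: "pre V0 \<theta>' j x = pre V0 \<theta> j x" if "j \<in> V1'" for j x
    using hid that by (simp add: pre_def)
  have ho_eq: "hidden_out V0 \<psi> \<theta>' j x = hidden_out V0 \<psi> \<theta> j x" if "j \<in> V1'" for j x
    using pre_eq[OF that] by (simp add: hidden_pre)
  from c consider (Wh) i j where "c = W i j" "i \<in> V0" "j \<in> V1'"
    | (Wo) j where "c = W j l0" "j \<in> V1'"
    | (Bh) j where "c = B j" "j \<in> V1'"
    | (Bo) "c = B l0"
    unfolding coords_def V2 by blast
  then show ?thesis
  proof cases
    case Wh
    have jV1: "j \<in> V1" using Wh sub by auto
    show ?thesis
      apply (rule exI[of _ "fst \<theta>' j l0 / fst \<theta> j l0"])
    proof (intro allI conjI)
      fix x
      have "dlt V0 V1 V2 \<psi> \<theta> c l0 x = (\<lambda>t. (\<psi> (pre V0 \<theta> j x + x i * t) - \<psi> (pre V0 \<theta> j x)) * fst \<theta> j l0)"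
        using Wh jV1 fin1 d01 l0 fin0 by (auto simp: dlt_Wh)
      then show "dlt V0 V1 V2 \<psi> \<theta> c l0 x differentiable (at 0)" by (simp only:) (rule diff_aux[OF dpsi])
      show "dlt V0 V1' V2 \<psi> \<theta>' c l0 x t = fst \<theta>' j l0 / fst \<theta> j l0 * dlt V0 V1 V2 \<psi> \<theta> c l0 x t" for t
        using Wh nz jV1 fin1 fin1' d01 d01' l0 fin0 pre_eq by (auto simp: dlt_Wh)
    qed
  next
    case Wo
    have jV1: "j \<in> V1" using Wo sub by auto
    show ?thesis
      apply (rule exI[of _ 1])
    proof (intro allI conjI)
      fix x
      have "dlt V0 V1 V2 \<psi> \<theta> c l0 x = (\<lambda>t. hidden_out V0 \<psi> \<theta> j x * t)"
        using Wo jV1 fin1 d01 l0 by (auto simp: dlt_Wo)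
      then show "dlt V0 V1 V2 \<psi> \<theta> c l0 x differentiable (at 0)"
        by (simp only:) (intro differentiable_mult differentiable_const differentiable_ident)
      show "dlt V0 V1' V2 \<psi> \<theta>' c l0 x t = 1 * dlt V0 V1 V2 \<psi> \<theta> c l0 x t" for t
        using Wo jV1 fin1 fin1' d01 d01' l0 ho_eq by (auto simp: dlt_Wo)
    qed
  next
    case Bh
    have jV1: "j \<in> V1" using Bh sub by auto
    show ?thesis
      apply (rule exI[of _ "fst \<theta>' j l0 / fst \<theta> j l0"])
    proof (intro allI conjI)
      fix x
      have "dlt V0 V1 V2 \<psi> \<theta> c l0 x = (\<lambda>t. (\<psi> (pre V0 \<theta> j x + 1 * t) - \<psi> (pre V0 \<theta> j x)) * fst \<theta> j l0)"
        using Bh jV1 fin1 d12 l0 by (auto simp: dlt_Bh)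
      then show "dlt V0 V1 V2 \<psi> \<theta> c l0 x differentiable (at 0)" by (simp only:) (rule diff_aux[OF dpsi])
      show "dlt V0 V1' V2 \<psi> \<theta>' c l0 x t = fst \<theta>' j l0 / fst \<theta> j l0 * dlt V0 V1 V2 \<psi> \<theta> c l0 x t" for t
        using Bh nz jV1 fin1 fin1' d12 d12' l0 pre_eq by (auto simp: dlt_Bh)
    qed
  next
    case Bo
    show ?thesis
      apply (rule exI[of _ 1])
    proof (intro allI conjI)
      fix x
      have "dlt V0 V1 V2 \<psi> \<theta> c l0 x = (\<lambda>t. t)"
        using Bo fin1 d12 l0 by (auto simp: dlt_Bo)
      then show "dlt V0 V1 V2 \<psi> \<theta> c l0 x differentiable (at 0)"
        by (simp only:) (rule differentiable_ident)
      show "dlt V0 V1' V2 \<psi> \<theta>' c l0 x t = 1 * dlt V0 V1 V2 \<psi> \<theta> c l0 x t" for t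
        using Bo fin1 fin1' d12 d12' l0 by (auto simp: dlt_Bo)
    qed
  qed
qed



lemma shift_zero[simp]: "shift \<phi> c 0 = \<phi>"
  by (cases c) auto

lemma resp_shift:
  "V2 = {l0} \<Longrightarrow> response V0 V V2 \<psi> (shift \<phi> c t) x =
     (response V0 V V2 \<psi> \<phi> x)(l0 := response V0 V V2 \<psi> \<phi> x l0 + dlt V0 V V2 \<psi> \<phi> c l0 x t)"
  by (auto simp: dlt_def response_def fun_eq_iff)

theorem proposition6p5:
  fixes V0 V1 V2 :: "'n set" and \<psi> :: "real \<Rightarrow> real" and \<theta> :: "'n param"
    and M :: "(('n \<Rightarrow> real) \<times> 'y) measure" and Ny :: "'y measure"
    and loss :: "('n \<Rightarrow> real) \<Rightarrow> 'y \<Rightarrow> real"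
  assumes "finite V0" and "finite V1" and "finite V2"
    and "V0 \<inter> V1 = {}" and "V0 \<inter> V2 = {}" and "V1 \<inter> V2 = {}"
    and "prob_space M"
    and "sets M = sets (PiM V0 (\<lambda>_. borel) \<Otimes>\<^sub>M Ny)"
    and "redundant V0 V1 V2 \<psi> (input_support M V0) \<theta>"
  shows "\<exists>V1' \<theta>'. V1' \<subseteq> V1
           \<and> efficient V0 V1' V2 \<psi> (input_support M V0) \<theta>'
           \<and> (\<forall>x\<in>input_support M V0. response V0 V1 V2 \<psi> \<theta> x = response V0 V1' V2 \<psi> \<theta>' x)
           \<and> ((card V2 = 1
                \<and> (\<forall>t. \<psi> differentiable (at t))
                \<and> (\<forall>u y. \<forall>l\<in>V2. (\<lambda>s. loss (u(l := u l + s)) y) differentiable (at 0))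
                \<and> (\<forall>V1''. V1'' \<subseteq> V1 \<longrightarrow> deriv_interchange V0 V1'' V2 \<psi> loss M)
                \<and> critical_point V0 V1 V2 \<psi> loss M \<theta>)
              \<longrightarrow> critical_point V0 V1' V2 \<psi> loss M \<theta>')"
proof -
  define X where "X = input_support M V0"
  from prune[OF assms(2) assms(4) assms(6), where \<theta>=\<theta> and \<psi>=\<psi> and X=X] obtain V1' \<theta>' where
    r: "V1' \<subseteq> V1" "efficient V0 V1' V2 \<psi> X \<theta>'"
       "\<forall>x\<in>X. response V0 V1 V2 \<psi> \<theta> x = response V0 V1' V2 \<psi> \<theta>' x"
       "\<forall>j\<in>V1'. snd \<theta>' j = snd \<theta> j \<and> (\<forall>i\<in>V0. fst \<theta>' i j = fst \<theta> i j) \<and> (\<exists>l\<in>V2. fst \<theta> j l \<noteq> 0)"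
    by blast
  show ?thesis
    unfolding X_def[symmetric]
  proof (rule exI[of _ V1'], rule exI[of _ \<theta>'], intro conjI impI)
    show "V1' \<subseteq> V1" "efficient V0 V1' V2 \<psi> X \<theta>'"
      "\<forall>x\<in>X. response V0 V1 V2 \<psi> \<theta> x = response V0 V1' V2 \<psi> \<theta>' x" using r by auto
  next
    assume H: "card V2 = 1
                \<and> (\<forall>t. \<psi> differentiable (at t))
                \<and> (\<forall>u y. \<forall>l\<in>V2. (\<lambda>s. loss (u(l := u l + s)) y) differentiable (at 0))
                \<and> (\<forall>V1''. V1'' \<subseteq> V1 \<longrightarrow> deriv_interchange V0 V1'' V2 \<psi> loss M)
                \<and> critical_point V0 V1 V2 \<psi> loss M \<theta>"
    then obtain l0 where V2: "V2 = {l0}" by (meson card_1_singletonE)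
    have dpsi: "\<forall>t. \<psi> differentiable (at t)" using H by blast
    have nz: "\<forall>j\<in>V1'. fst \<theta> j l0 \<noteq> 0" using r(4) V2 by auto
    have hid: "\<forall>j\<in>V1'. snd \<theta>' j = snd \<theta> j \<and> (\<forall>i\<in>V0. fst \<theta>' i j = fst \<theta> i j)" using r(4) by auto
    show "critical_point V0 V1' V2 \<psi> loss M \<theta>'"
      unfolding critical_point_def
    proof
      fix c assume c: "c \<in> coords V0 V1' V2"
      obtain \<kappa> where \<kappa>: "\<And>x. (dlt V0 V1 V2 \<psi> \<theta> c l0 x) differentiable (at 0)"
          "\<And>x t. dlt V0 V1' V2 \<psi> \<theta>' c l0 x t = \<kappa> * dlt V0 V1 V2 \<psi> \<theta> c l0 x t"
        using kappa[OF assms(2) r(1) assms(4) assms(5) assms(6) V2 assms(1) hid nz c dpsi] by blast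
      have cV1: "c \<in> coords V0 V1 V2" using coords_mono[OF r(1)] c by blast
      have di1: "deriv_interchange V0 V1 V2 \<psi> loss M" and di2: "deriv_interchange V0 V1' V2 \<psi> loss M"
        using H r(1) by auto
      obtain D where D: "\<forall>z\<in>space M. ((\<lambda>t. loss (response V0 V1 V2 \<psi> (shift \<theta> c t) (fst z)) (snd z))
                         has_real_derivative D z) (at 0)" "integrable M D"
          "((\<lambda>t. cost V0 V1 V2 \<psi> loss M (shift \<theta> c t)) has_real_derivative (\<integral>z. D z \<partial>M)) (at 0)"
        using di1 cV1 unfolding deriv_interchange_def by blast
      obtain D' where D': "\<forall>z\<in>space M. ((\<lambda>t. loss (response V0 V1' V2 \<psi> (shift \<theta>' c t) (fst z)) (snd z))
                         has_real_derivative D' z) (at 0)" "integrable M D'"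
          "((\<lambda>t. cost V0 V1' V2 \<psi> loss M (shift \<theta>' c t)) has_real_derivative (\<integral>z. D' z \<partial>M)) (at 0)"
        using di2 c unfolding deriv_interchange_def by blast
      have crit: "((\<lambda>t. cost V0 V1 V2 \<psi> loss M (shift \<theta> c t)) has_real_derivative 0) (at 0)"
        using H cV1 unfolding critical_point_def by blast
      have I0: "(\<integral>z. D z \<partial>M) = 0" using DERIV_unique[OF D(3) crit] .
      have AE: "AE z in M. D' z = \<kappa> * D z"
        using support_AE[OF assms(1) assms(8)] AE_space
      proof eventually_elim
        case (elim z)
        then have z: "z \<in> space M" and xX: "fst z \<in> X" by (auto simp: X_def)
        define x where "x = fst z"
        define y where "y = snd z"
        define u0 where "u0 = response V0 V1 V2 \<psi> \<theta> x"
        define L where "L s = loss (u0(l0 := u0 l0 + s)) y" for s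
        have "L differentiable (at 0)" using H V2 unfolding L_def by auto
        then obtain L' where L': "(L has_real_derivative L') (at 0)"
          using DERIV_deriv_iff_real_differentiable by blast
        obtain d where d: "(dlt V0 V1 V2 \<psi> \<theta> c l0 x has_real_derivative d) (at 0)"
          using \<kappa>(1)[of x] DERIV_deriv_iff_real_differentiable by blast
        have d0: "dlt V0 V1 V2 \<psi> \<theta> c l0 x 0 = 0" by (simp add: dlt_def)
        have e1: "(\<lambda>t. loss (response V0 V1 V2 \<psi> (shift \<theta> c t) x) y) = (\<lambda>t. L (dlt V0 V1 V2 \<psi> \<theta> c l0 x t))"
          by (rule ext) (simp add: resp_shift[OF V2] L_def u0_def)
        have u0': "response V0 V1' V2 \<psi> \<theta>' x = u0" using r(3) xX unfolding u0_def x_def by auto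
        have e2: "(\<lambda>t. loss (response V0 V1' V2 \<psi> (shift \<theta>' c t) x) y) = (\<lambda>t. L (\<kappa> * dlt V0 V1 V2 \<psi> \<theta> c l0 x t))"
          by (rule ext) (simp add: resp_shift[OF V2] L_def u0' \<kappa>(2))
        have L'0: "(L has_real_derivative L') (at (dlt V0 V1 V2 \<psi> \<theta> c l0 x 0))" using L' d0 by simp
        have L'1: "(L has_real_derivative L') (at (\<kappa> * dlt V0 V1 V2 \<psi> \<theta> c l0 x 0))" using L' d0 by simp
        have c1: "((\<lambda>t. L (dlt V0 V1 V2 \<psi> \<theta> c l0 x t)) has_real_derivative L' * d) (at 0)"
          by (rule DERIV_chain2[OF L'0 d])
        have c2: "((\<lambda>t. L (\<kappa> * dlt V0 V1 V2 \<psi> \<theta> c l0 x t)) has_real_derivative L' * (\<kappa> * d)) (at 0)"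
          by (rule DERIV_chain2[OF L'1 DERIV_cmult[OF d]])
        have "D z = L' * d"
          using D(1) z c1 e1 unfolding x_def y_def by (metis DERIV_unique)
        moreover have "D' z = L' * (\<kappa> * d)"
          using D'(1) z c2 e2 unfolding x_def y_def by (metis DERIV_unique)
        ultimately show ?case by simp
      qed
      have "(\<integral>z. D' z \<partial>M) = (\<integral>z. \<kappa> * D z \<partial>M)"
        using D(2) D'(2) AE by (intro integral_cong_AE) auto
      also have "\<dots> = \<kappa> * (\<integral>z. D z \<partial>M)" by simp
      finally have "(\<integral>z. D' z \<partial>M) = 0" using I0 by simp
      then show "((\<lambda>t. cost V0 V1' V2 \<psi> loss M (shift \<theta>' c t)) has_real_derivative 0) (at 0)"
        using D'(3) by simp
    qed
  qed
qed

end
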